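(* For any positive integer $m$ and any integer $\Delta$ with $1\leq \Delta \leq m$ such that $(\Delta-1)m$ is even, there exists a finite simple undirected graph $G$ with $\operatorname{adim}(G)=m$ and maximum degree $\Delta$ such that $$\operatorname{adim}(G) = \frac{2(|V(G)|-1)}{\Delta+3}.$$
   Context: For a graph $G$, $d(u,v)$ is the shortest-path distance ($\infty$ if $u,v$ lie in different components), and $d_1(u,v)=\min(d(u,v),2)$. A set $A\subseteq V(G)$ is an adjacency resolving set if for all distinct $x,y\in V(G)$ there is $z\in A$ with $d_1(z,x)\neq d_1(z,y)$. The adjacency dimension $\operatorname{adim}(G)$ is the minimum cardinality of an adjacency resolving set. *)

theory Defs
  imports Main "HOL-Library.Extended_Nat"
begin

definition simple_graph :: "'a set \<Rightarrow> ('a \<Rightarrow> 'a \<Rightarrow> bool) \<Rightarrow> bool" where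
  "simple_graph V E \<longleftrightarrow> finite V \<and> (\<forall>x y. E x y \<longrightarrow> x \<in> V \<and> y \<in> V)
     \<and> (\<forall>x y. E x y \<longrightarrow> E y x) \<and> (\<forall>x. \<not> E x x)"

definition walk :: "'a set \<Rightarrow> ('a \<Rightarrow> 'a \<Rightarrow> bool) \<Rightarrow> 'a list \<Rightarrow> bool" where
  "walk V E p \<longleftrightarrow> p \<noteq> [] \<and> set p \<subseteq> V \<and> (\<forall>i. Suc i < length p \<longrightarrow> E (p ! i) (p ! Suc i))"

definition gdist :: "'a set \<Rightarrow> ('a \<Rightarrow> 'a \<Rightarrow> bool) \<Rightarrow> 'a \<Rightarrow> 'a \<Rightarrow> enat" where
  "gdist V E u v = (INF p \<in> {p. walk V E p \<and> hd p = u \<and> last p = v}. enat (length p - 1))"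

definition gdist1 :: "'a set \<Rightarrow> ('a \<Rightarrow> 'a \<Rightarrow> bool) \<Rightarrow> 'a \<Rightarrow> 'a \<Rightarrow> enat" where
  "gdist1 V E u v = min (gdist V E u v) 2"

definition adj_resolving :: "'a set \<Rightarrow> ('a \<Rightarrow> 'a \<Rightarrow> bool) \<Rightarrow> 'a set \<Rightarrow> bool" where
  "adj_resolving V E A \<longleftrightarrow> A \<subseteq> V \<and>
     (\<forall>x\<in>V. \<forall>y\<in>V. x \<noteq> y \<longrightarrow> (\<exists>z\<in>A. gdist1 V E z x \<noteq> gdist1 V E z y))"

definition adim :: "'a set \<Rightarrow> ('a \<Rightarrow> 'a \<Rightarrow> bool) \<Rightarrow> nat" where
  "adim V E = (LEAST k. \<exists>A. adj_resolving V E A \<and> card A = k)"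

definition degree :: "'a set \<Rightarrow> ('a \<Rightarrow> 'a \<Rightarrow> bool) \<Rightarrow> 'a \<Rightarrow> nat" where
  "degree V E v = card {u \<in> V. E v u}"

definition max_degree :: "'a set \<Rightarrow> ('a \<Rightarrow> 'a \<Rightarrow> bool) \<Rightarrow> nat" where
  "max_degree V E = Max (degree V E ` V)"

end

theory Submission imports Defs begin

lemma walk_len3:
  assumes "walk V E p" "hd p = u" "last p = v" "u \<noteq> v" "\<not> E u v"
  shows "3 \<le> length p"
proof -
  obtain a q where p: "p = a # q" using assms(1) unfolding walk_def by (cases p) auto
  show ?thesis
  proof (cases q)
    case Nil then show ?thesis using assms p by auto
  next
    case (Cons b q')
    show ?thesis
    proof (cases q')
      case Nil
      have "E (p!0) (p!1)" using assms(1) unfolding walk_def p Cons Nil by auto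
      then show ?thesis using assms p Cons Nil by auto
    next
      case (Cons c q'') then show ?thesis using p \<open>q = b # q'\<close> by auto
    qed
  qed
qed

lemma gdist1_char:
  assumes "simple_graph V E" "u \<in> V" "v \<in> V"
  shows "gdist1 V E u v = (if u = v then 0 else if E u v then 1 else 2)"
proof -
  let ?S = "{p. walk V E p \<and> hd p = u \<and> last p = v}"
  show ?thesis
  proof (cases "u = v")
    case True
    have "[u] \<in> ?S" using assms True by (auto simp: walk_def)
    then have "gdist V E u v \<le> enat (length [u] - 1)" unfolding gdist_def by (rule INF_lower)
    then show ?thesis using True by (simp add: gdist1_def zero_enat_def[symmetric])
  next
    case F: False
    show ?thesis
    proof (cases "E u v")
      case True
      have "[u,v] \<in> ?S" using assms True by (auto simp: walk_def nth_Cons split: nat.splits)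
      then have "gdist V E u v \<le> enat (length [u,v] - 1)" unfolding gdist_def by (rule INF_lower)
      moreover have "gdist V E u v \<ge> 1" unfolding gdist_def
      proof (rule INF_greatest)
        fix p assume "p \<in> ?S"
        then have "length p \<noteq> 1" using F by (cases p) auto
        moreover have "p \<noteq> []" using \<open>p \<in> ?S\<close> by (auto simp: walk_def)
        ultimately have "2 \<le> length p" 
        proof -
          have "length p \<noteq> 0" using \<open>p \<noteq> []\<close> by simp
          then show ?thesis using \<open>length p \<noteq> 1\<close> by linarith
        qed
        then show "1 \<le> enat (length p - 1)" by (simp add: one_enat_def)
      qed
      ultimately have "gdist V E u v = 1" by (simp add: one_enat_def)
      then show ?thesis using F True by (simp add: gdist1_def)
    next
      case False
      have "gdist V E u v \<ge> 2" unfolding gdist_def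
      proof (rule INF_greatest)
        fix p assume "p \<in> ?S"
        then have "3 \<le> length p" using walk_len3[of V E p u v] F False by simp
        then show "2 \<le> enat (length p - 1)" by simp
      qed
      then have "min (gdist V E u v) 2 = 2" by (rule min_absorb2)
      then show ?thesis using F False by (simp add: gdist1_def)
    qed
  qed
qed

lemma resolving_char:
  assumes "simple_graph V E"
  shows "adj_resolving V E A \<longleftrightarrow> A \<subseteq> V \<and>
     (\<forall>x\<in>V. \<forall>y\<in>V. x \<noteq> y \<longrightarrow> (\<exists>z\<in>A. z = x \<or> z = y \<or> E z x \<noteq> E z y))"
proof -
  have key: "gdist1 V E z x \<noteq> gdist1 V E z y \<longleftrightarrow> (z = x \<or> z = y \<or> E z x \<noteq> E z y)"
    if "z \<in> V" "x \<in> V" "y \<in> V" "x \<noteq> y" for z x y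
    using that gdist1_char[OF assms] by auto
  show ?thesis unfolding adj_resolving_def
  proof (intro iffI conjI ballI impI; (elim conjE)?)
    fix x y assume "A \<subseteq> V" "\<forall>x\<in>V. \<forall>y\<in>V. x \<noteq> y \<longrightarrow> (\<exists>z\<in>A. gdist1 V E z x \<noteq> gdist1 V E z y)"
      "x \<in> V" "y \<in> V" "x \<noteq> y"
    then obtain z where "z \<in> A" "gdist1 V E z x \<noteq> gdist1 V E z y" by blast
    then show "\<exists>z\<in>A. z = x \<or> z = y \<or> E z x \<noteq> E z y" using key \<open>A \<subseteq> V\<close> \<open>x \<in> V\<close> \<open>y \<in> V\<close> \<open>x \<noteq> y\<close> by blast
  next
    fix x y assume "A \<subseteq> V" "\<forall>x\<in>V. \<forall>y\<in>V. x \<noteq> y \<longrightarrow> (\<exists>z\<in>A. z = x \<or> z = y \<or> E z x \<noteq> E z y)"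
      "x \<in> V" "y \<in> V" "x \<noteq> y"
    then obtain z where "z \<in> A" "z = x \<or> z = y \<or> E z x \<noteq> E z y" by blast
    then show "\<exists>z\<in>A. gdist1 V E z x \<noteq> gdist1 V E z y" using key \<open>A \<subseteq> V\<close> \<open>x \<in> V\<close> \<open>y \<in> V\<close> \<open>x \<noteq> y\<close> by blast
  qed (auto)
qed

lemma lower_bound:
  assumes G: "simple_graph V E" and D: "\<forall>v\<in>V. degree V E v \<le> D"
    and R: "adj_resolving V E A"
  shows "2 * card V \<le> card A * (D + 3) + 2"
proof -
  have fin: "finite V" using G by (simp add: simple_graph_def)
  have AV: "A \<subseteq> V" using R by (simp add: adj_resolving_def)
  have finA: "finite A" using fin AV finite_subset by blast
  define W where "W = V - A"
  have finW: "finite W" using fin W_def by simp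
  define f where "f x = {a\<in>A. E a x}" for x
  have finf: "finite (f x)" for x using finA f_def by simp
  have inj: "inj_on f W"
  proof (rule inj_onI)
    fix x y assume xy: "x \<in> W" "y \<in> W" "f x = f y"
    show "x = y"
    proof (rule ccontr)
      assume "x \<noteq> y"
      then obtain z where "z \<in> A" "z = x \<or> z = y \<or> E z x \<noteq> E z y"
        using R resolving_char[OF G] xy W_def by blast
      then show False using xy W_def f_def by auto
    qed
  qed
  define W0 where "W0 = {x\<in>W. f x = {}}"
  define W1 where "W1 = {x\<in>W. card (f x) = 1}"
  have c0: "card W0 \<le> 1"
  proof -
    have "inj_on f W0" using inj W0_def inj_on_subset by fastforce
    then have "card W0 = card (f ` W0)" by (simp add: card_image)
    also have "\<dots> \<le> card {{}::'a set}" by (rule card_mono) (auto simp: W0_def)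
    finally show ?thesis by simp
  qed
  have c1: "card W1 \<le> card A"
  proof -
    have "inj_on f W1" using inj W1_def inj_on_subset by fastforce
    then have "card W1 = card (f ` W1)" by (simp add: card_image)
    also have "\<dots> \<le> card ((\<lambda>a. {a}) ` A)"
    proof (rule card_mono)
      show "finite ((\<lambda>a. {a}) ` A)" using finA by simp
      show "f ` W1 \<subseteq> (\<lambda>a. {a}) ` A"
      proof
        fix S assume "S \<in> f ` W1"
        then obtain x where "x \<in> W1" "S = f x" by auto
        then obtain a where "S = {a}" using W1_def card_1_singletonE by blast
        then show "S \<in> (\<lambda>a. {a}) ` A" using \<open>S = f x\<close> f_def by auto
      qed
    qed
    also have "\<dots> \<le> card A" by (rule card_image_le[OF finA])
    finally show ?thesis .
  qed
  have pw: "2 \<le> card (f x) + (if x \<in> W1 then 1 else 0) + (if x \<in> W0 then 2 else 0)"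
    if "x \<in> W" for x
    using that finf[of x] unfolding W0_def W1_def
    by (cases "card (f x)") (auto simp: card_eq_0_iff)
  have "2 * card W = (\<Sum>x\<in>W. 2)" by simp
  also have "\<dots> \<le> (\<Sum>x\<in>W. card (f x) + (if x \<in> W1 then 1 else 0) + (if x \<in> W0 then 2 else 0))"
    by (rule sum_mono) (rule pw)
  also have "\<dots> = (\<Sum>x\<in>W. card (f x)) + (\<Sum>x\<in>W. (if x \<in> W1 then 1 else 0)) + (\<Sum>x\<in>W. (if x \<in> W0 then 2 else 0))"
    by (simp add: sum.distrib)
  also have "(\<Sum>x\<in>W. (if x \<in> W1 then 1 else 0)) = card W1"
    using finW W1_def by (simp add: sum.If_cases Int_def)
  also have "(\<Sum>x\<in>W. (if x \<in> W0 then (2::nat) else 0)) = 2 * card W0"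
    using finW W0_def by (simp add: sum.If_cases Int_def)
  also have "(\<Sum>x\<in>W. card (f x)) = (\<Sum>x\<in>W. \<Sum>a\<in>A. if E a x then 1 else 0)"
    using finA by (simp add: f_def sum.inter_filter[symmetric])
  also have "\<dots> = (\<Sum>a\<in>A. \<Sum>x\<in>W. if E a x then 1 else 0)" by (rule sum.swap)
  also have "\<dots> = (\<Sum>a\<in>A. card {x\<in>W. E a x})"
    using finW by (simp add: sum.inter_filter[symmetric])
  also have "\<dots> \<le> (\<Sum>a\<in>A. D)"
  proof (rule sum_mono)
    fix a assume "a \<in> A"
    have "card {x\<in>W. E a x} \<le> card {u\<in>V. E a u}" by (rule card_mono) (use fin W_def in auto)
    also have "\<dots> \<le> D" using D AV \<open>a \<in> A\<close> by (auto simp: degree_def)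
    finally show "card {x\<in>W. E a x} \<le> D" .
  qed
  finally have "2 * card W \<le> card A * D + card W1 + 2 * card W0" by simp
  moreover have "card V = card A + card W"
  proof -
    have "V = A \<union> W" using W_def AV by auto
    moreover have "A \<inter> W = {}" using W_def by auto
    ultimately show ?thesis using finA finW card_Un_disjoint by metis
  qed
  ultimately show ?thesis using c0 c1 by (simp add: algebra_simps)
qed


definition cyc :: "nat \<Rightarrow> nat \<Rightarrow> nat \<Rightarrow> nat" where
  "cyc m i s = (if i + s < m then i + s else i + s - m)"

definition ends :: "nat \<Rightarrow> nat \<Rightarrow> nat \<Rightarrow> nat set" where
  "ends m k x = (if x < 2*m then {x - m} else if x = 2*m then {}
     else if x < 2*m+1+k*m then {(x-(2*m+1)) mod m, cyc m ((x-(2*m+1)) mod m) ((x-(2*m+1)) div m + 1)}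
     else {x-(2*m+1+k*m), x-(2*m+1+k*m) + m div 2})"

definition cE :: "nat \<Rightarrow> nat \<Rightarrow> nat \<Rightarrow> nat \<Rightarrow> nat \<Rightarrow> bool" where
  "cE m k N x y = ((x < m \<and> m \<le> y \<and> y < N \<and> x \<in> ends m k y) \<or> (y < m \<and> m \<le> x \<and> x < N \<and> y \<in> ends m k x))"

lemma SS_eq:
  assumes "i < m" "i' < m" "1 \<le> s" "s \<le> k" "1 \<le> s'" "s' \<le> k" "2*k < m"
    "{i, cyc m i s} = {i', cyc m i' s'}"
  shows "i = i' \<and> s = s'"
  using assms(8) unfolding doubleton_eq_iff cyc_def using assms(1-7) by (auto split: if_splits)

lemma SD_neq:
  assumes "i < m" "1 \<le> s" "s \<le> k" "2*k < m" "2*h = m" "j < h"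
  shows "{i, cyc m i s} \<noteq> {j, j + h}"
  unfolding doubleton_eq_iff cyc_def using assms by (auto split: if_splits)

lemma DD_eq:
  assumes "j < (h::nat)" "j' < h" "{j, j + h} = {j', j' + h}"
  shows "j = j'"
  using assms(3) unfolding doubleton_eq_iff using assms(1,2) by (elim disjE conjE) arith+

locale constr =
  fixes m k c :: nat
  assumes m1: "1 \<le> m" and k2: "2*k < m" and cc: "c = 0 \<or> (2*c = m \<and> 2*k+2 \<le> m)"
begin

definition "N = 2*m+1+k*m+c"
definition "D = 2*k+1+(if c = 0 then 0 else 1)"

lemma half: "c \<noteq> 0 \<Longrightarrow> m div 2 = c" using cc by auto

lemma ends_P: "x < 2*m \<Longrightarrow> ends m k x = {x - m}" by (simp add: ends_def)
lemma ends_Z: "ends m k (2*m) = {}" by (simp add: ends_def)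

lemma dec_S:
  assumes "2*m < x" "x < 2*m+1+k*m"
  obtains i s where "i < m" "1 \<le> s" "s \<le> k" "x = 2*m+1+(s-1)*m+i" "ends m k x = {i, cyc m i s}"
proof -
  define t where "t = x - (2*m+1)"
  have tk: "t < k*m" using assms t_def by simp
  have mpos: "0 < m" using m1 by simp
  have d: "t div m < k" using tk by (simp add: less_mult_imp_div_less)
  have e: "t = (t div m)*m + t mod m" by simp
  show ?thesis
  proof (rule that[of "t mod m" "t div m + 1"])
    show "t mod m < m" using mpos by simp
    show "1 \<le> t div m + 1" by simp
    show "t div m + 1 \<le> k" using d by simp
    show "x = 2*m+1+(t div m + 1 - 1)*m + t mod m" using e t_def assms by simp
    show "ends m k x = {t mod m, cyc m (t mod m) (t div m + 1)}"
      using assms unfolding ends_def t_def by simp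
  qed
qed

lemma dec_D:
  assumes "2*m+1+k*m \<le> x" "x < N"
  obtains j where "j < c" "x = 2*m+1+k*m+j" "ends m k x = {j, j + c}"
proof -
  define j where "j = x - (2*m+1+k*m)"
  have "c \<noteq> 0" using assms N_def by auto
  then have h: "m div 2 = c" by (rule half)
  have "\<not> x < 2*m+1+k*m" "x \<noteq> 2*m" "\<not> x < 2*m" using assms by auto
  then have E: "ends m k x = {j, j + c}" unfolding ends_def j_def h by simp
  show ?thesis
  proof (rule that[of j])
    show "j < c" using assms N_def j_def by auto
    show "x = 2*m+1+k*m+j" using assms j_def by auto
    show "ends m k x = {j, j + c}" by (rule E)
  qed
qed

lemma ends_sub: assumes "m \<le> x" "x < N" shows "ends m k x \<subseteq> {..<m}"
proof (cases "x < 2*m")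
  case True then show ?thesis using ends_P assms by auto
next
  case F1: False
  show ?thesis
  proof (cases "x = 2*m")
    case True then show ?thesis using ends_Z by auto
  next
    case F2: False
    show ?thesis
    proof (cases "x < 2*m+1+k*m")
      case True
      then obtain i s where "i < m" "1 \<le> s" "s \<le> k" "ends m k x = {i, cyc m i s}"
        using dec_S[of x] F1 F2 by (metis linorder_neqE_nat not_less)
      then show ?thesis using k2 by (auto simp: cyc_def)
    next
      case False
      then obtain j where "j < c" "ends m k x = {j, j + c}" using dec_D[of x] assms by (metis not_less)
      then show ?thesis using cc by auto
    qed
  qed
qed

lemma card_ends: assumes "m \<le> x" "x < N" shows "card (ends m k x) \<le> D"
proof -
  have c2: "card {a, b::nat} \<le> 2" for a b by (simp add: card_insert_if)
  show ?thesis
  proof (cases "x < 2*m")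
    case True then show ?thesis using ends_P D_def by auto
  next
    case F1: False
    show ?thesis
    proof (cases "x = 2*m")
      case True then show ?thesis using ends_Z by auto
    next
      case F2: False
      show ?thesis
      proof (cases "x < 2*m+1+k*m")
        case True
        have "k \<noteq> 0"
        proof
          assume "k = 0" then show False using True F1 F2 by simp
        qed
        then show ?thesis using c2[of "(x-(2*m+1)) mod m" "cyc m ((x-(2*m+1)) mod m) ((x-(2*m+1)) div m + 1)"]
          True F1 F2 unfolding ends_def D_def by auto
      next
        case False
        then obtain j where "j < c" "ends m k x = {j, j + c}" using dec_D[of x] assms by (metis not_less)
        then show ?thesis using c2[of j "j+c"] D_def by auto
      qed
    qed
  qed
qed

lemma ends_two_S:
  assumes "2*m < x" "x < 2*m+1+k*m"
  shows "\<exists>a b. a \<noteq> b \<and> ends m k x = {a, b}"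
proof -
  obtain i s where "i < m" "1 \<le> s" "s \<le> k" "ends m k x = {i, cyc m i s}" using dec_S assms by metis
  moreover have "i \<noteq> cyc m i s" using calculation k2 by (auto simp: cyc_def)
  ultimately show ?thesis by blast
qed

lemma ends_two_D:
  assumes "2*m+1+k*m \<le> x" "x < N"
  shows "\<exists>a b. a \<noteq> b \<and> ends m k x = {a, b}"
proof -
  obtain j where "j < c" "ends m k x = {j, j + c}" using dec_D assms by metis
  then show ?thesis by (metis add_cancel_left_right not_less_zero)
qed

lemma ends_inj:
  assumes x: "m \<le> x" "x < N" and y: "m \<le> y" "y < N" and e: "ends m k x = ends m k y"
  shows "x = y"
proof -
  have P: "x = y" if "x < 2*m" "m \<le> x" "m \<le> y" "y < N" "ends m k x = ends m k y" for x y
  proof -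
    have ex: "ends m k x = {x - m}" using ends_P that by simp
    consider "y < 2*m" | "y = 2*m" | "2*m < y \<and> y < 2*m+1+k*m" | "2*m+1+k*m \<le> y" by linarith
    then show ?thesis
    proof cases
      case 1 then show ?thesis using ex ends_P that by auto
    next
      case 2 then show ?thesis using ex ends_Z that by auto
    next
      case 3 then obtain a b where "a \<noteq> b" "ends m k y = {a,b}" using ends_two_S[of y] by auto
      moreover have "{x - m} = {a, b}" using calculation ex that by simp
      then have "a = b" by (metis insertI1 insert_commute singletonD)
      ultimately show ?thesis by simp
    next
      case 4 then obtain a b where "a \<noteq> b" "ends m k y = {a,b}" using ends_two_D[of y] \<open>y < N\<close> by auto
      moreover have "{x - m} = {a, b}" using calculation ex that by simp
      then have "a = b" by (metis insertI1 insert_commute singletonD)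
      ultimately show ?thesis by simp
    qed
  qed
  have Z: "x = y" if "x = 2*m" "m \<le> y" "y < N" "ends m k x = ends m k y" for x y
  proof -
    consider "y < 2*m" | "y = 2*m" | "2*m < y \<and> y < 2*m+1+k*m" | "2*m+1+k*m \<le> y" by linarith
    then show ?thesis
    proof cases
      case 1 then show ?thesis using ends_Z ends_P that by auto
    next
      case 2 then show ?thesis using that by auto
    next
      case 3 then obtain a b where "a \<noteq> b" "ends m k y = {a,b}" using ends_two_S[of y] by auto
      then show ?thesis using ends_Z that by auto
    next
      case 4 then obtain a b where "a \<noteq> b" "ends m k y = {a,b}" using ends_two_D[of y] \<open>y < N\<close> by auto
      then show ?thesis using ends_Z that by auto
    qed
  qed
  consider "x < 2*m" | "y < 2*m" | "x = 2*m" | "y = 2*m"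
    | "2*m < x \<and> x < 2*m+1+k*m \<and> 2*m < y \<and> y < 2*m+1+k*m"
    | "2*m < x \<and> x < 2*m+1+k*m \<and> 2*m+1+k*m \<le> y"
    | "2*m < y \<and> y < 2*m+1+k*m \<and> 2*m+1+k*m \<le> x"
    | "2*m+1+k*m \<le> x \<and> 2*m+1+k*m \<le> y" by linarith
  then show ?thesis
  proof cases
    case 1 then show ?thesis using P[of x y] x y e by simp
  next
    case 2 then show ?thesis using P[of y x] x y e by auto
  next
    case 3 then show ?thesis using Z[of x y] x y e by simp
  next
    case 4 then show ?thesis using Z[of y x] x y e by auto
  next
    case 5
    obtain i s where hs: "i < m" "1 \<le> s" "s \<le> k" "x = 2*m+1+(s-1)*m+i" "ends m k x = {i, cyc m i s}"
      using dec_S 5 by metis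
    obtain i' s' where hs': "i' < m" "1 \<le> s'" "s' \<le> k" "y = 2*m+1+(s'-1)*m+i'" "ends m k y = {i', cyc m i' s'}"
      using dec_S 5 by metis
    have "i = i' \<and> s = s'" using SS_eq[of i m i' s k s'] hs hs' e k2 by simp
    then show ?thesis using hs hs' by simp
  next
    case 6
    obtain i s where hs: "i < m" "1 \<le> s" "s \<le> k" "ends m k x = {i, cyc m i s}"
      using dec_S 6 by metis
    obtain j where j: "j < c" "ends m k y = {j, j + c}" using dec_D 6 y by metis
    have "2*c = m" using cc j by auto
    then show ?thesis using SD_neq[of i m s k c j] hs j e k2 by simp
  next
    case 7
    obtain i s where hs: "i < m" "1 \<le> s" "s \<le> k" "ends m k y = {i, cyc m i s}"
      using dec_S 7 by metis
    obtain j where j: "j < c" "ends m k x = {j, j + c}" using dec_D 7 x by metis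
    have "2*c = m" using cc j by auto
    then show ?thesis using SD_neq[of i m s k c j] hs j e k2 by simp
  next
    case 8
    obtain j where j: "j < c" "x = 2*m+1+k*m+j" "ends m k x = {j, j + c}" using dec_D 8 x by metis
    obtain j' where j': "j' < c" "y = 2*m+1+k*m+j'" "ends m k y = {j', j' + c}" using dec_D 8 y by metis
    have "j = j'" using DD_eq[of j c j'] j j' e by simp
    then show ?thesis using j j' by simp
  qed
qed


lemma sg: "simple_graph {..<N} (cE m k N)"
  unfolding simple_graph_def cE_def by auto

lemma cE_A: "a < m \<Longrightarrow> m \<le> x \<Longrightarrow> x < N \<Longrightarrow> cE m k N a x \<longleftrightarrow> a \<in> ends m k x"
  by (auto simp: cE_def)

lemma mN: "m \<le> N" by (simp add: N_def)

lemma res: "adj_resolving {..<N} (cE m k N) {..<m}"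
  unfolding resolving_char[OF sg]
proof (intro conjI ballI impI)
  show "{..<m} \<subseteq> {..<N}" using mN by auto
next
  fix x y assume x: "x \<in> {..<N}" and y: "y \<in> {..<N}" and xy: "x \<noteq> y"
  show "\<exists>z\<in>{..<m}. z = x \<or> z = y \<or> cE m k N z x \<noteq> cE m k N z y"
  proof (cases "x < m \<or> y < m")
    case True then show ?thesis by auto
  next
    case False
    then have xm: "m \<le> x" "x < N" and ym: "m \<le> y" "y < N" using x y by auto
    have "ends m k x \<noteq> ends m k y" using ends_inj xm ym xy by blast
    then obtain a where a: "a \<in> ends m k x \<and> a \<notin> ends m k y \<or> a \<notin> ends m k x \<and> a \<in> ends m k y" by blast
    have am: "a < m" using a ends_sub[OF xm] ends_sub[OF ym] by auto
    show ?thesis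
    proof (rule bexI[of _ a])
      show "a = x \<or> a = y \<or> cE m k N a x \<noteq> cE m k N a y"
        using a cE_A[OF am xm] cE_A[OF am ym] by auto
      show "a \<in> {..<m}" using am by simp
    qed
  qed
qed

lemma deg_W: assumes "m \<le> x" "x < N" shows "degree {..<N} (cE m k N) x \<le> D"
proof -
  have "{u \<in> {..<N}. cE m k N x u} \<subseteq> ends m k x" using assms by (auto simp: cE_def)
  moreover have "finite (ends m k x)" using ends_sub[OF assms] finite_subset by blast
  ultimately have "card {u \<in> {..<N}. cE m k N x u} \<le> card (ends m k x)" by (rule card_mono[rotated])
  then show ?thesis using card_ends[OF assms] by (simp add: degree_def)
qed

definition "back i s = (if s \<le> i then i - s else i + m - s)"

lemma deg_A: assumes im: "i < m" shows "degree {..<N} (cE m k N) i \<le> D"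
proof -
  define S1 where "S1 = (\<lambda>s. 2*m+1+(s-1)*m+i) ` {1..k}"
  define S2 where "S2 = (\<lambda>s. 2*m+1+(s-1)*m+back i s) ` {1..k}"
  define S3 where "S3 = (if c = 0 then {} else {2*m+1+k*m+(if i < c then i else i - c)})"
  have sub: "{u \<in> {..<N}. cE m k N i u} \<subseteq> {m+i} \<union> S1 \<union> S2 \<union> S3"
  proof
    fix y assume "y \<in> {u \<in> {..<N}. cE m k N i u}"
    then have yN: "y < N" and ym: "m \<le> y" and iy: "i \<in> ends m k y" using im by (auto simp: cE_def)
    consider "y < 2*m" | "y = 2*m" | "2*m < y \<and> y < 2*m+1+k*m" | "2*m+1+k*m \<le> y" by linarith
    then show "y \<in> {m+i} \<union> S1 \<union> S2 \<union> S3"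
    proof cases
      case 1 then show ?thesis using iy ends_P ym by auto
    next
      case 2 then show ?thesis using iy ends_Z by auto
    next
      case 3
      then obtain i' s where hs: "i' < m" "1 \<le> s" "s \<le> k" "y = 2*m+1+(s-1)*m+i'" "ends m k y = {i', cyc m i' s}"
        using dec_S[of y] by auto
      have "i = i' \<or> i = cyc m i' s" using iy hs by auto
      then show ?thesis
      proof
        assume "i = i'" then have "y \<in> S1" using hs unfolding S1_def by auto
        then show ?thesis by blast
      next
        assume "i = cyc m i' s"
        then have "i' = back i s" using hs k2 im unfolding cyc_def back_def by (auto split: if_splits)
        then have "y \<in> S2" using hs unfolding S2_def by auto
        then show ?thesis by blast
      qed
    next
      case 4
      then obtain j where j: "j < c" "y = 2*m+1+k*m+j" "ends m k y = {j, j + c}"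
        using dec_D[of y] yN by auto
      have "2*c = m" using cc j by auto
      then have "j = (if i < c then i else i - c)" using iy j im by auto
      then have "y \<in> S3" using j S3_def by auto
      then show ?thesis by blast
    qed
  qed
  have "card {u \<in> {..<N}. cE m k N i u} \<le> card ({m+i} \<union> S1 \<union> S2 \<union> S3)"
    by (rule card_mono[OF _ sub]) (simp add: S1_def S2_def S3_def)
  also have "\<dots> \<le> card {m+i} + card S1 + card S2 + card S3"
    by (meson add_le_mono card_Un_le le_refl order_trans)
  also have "\<dots> \<le> 1 + k + k + (if c = 0 then 0 else 1)"
  proof -
    have "card S1 \<le> k" unfolding S1_def using card_image_le[of "{1..k}"] by (metis card_atLeastAtMost diff_Suc_1 finite_atLeastAtMost)
    moreover have "card S2 \<le> k" unfolding S2_def using card_image_le[of "{1..k}"] by (metis card_atLeastAtMost diff_Suc_1 finite_atLeastAtMost)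
    moreover have "card S3 \<le> (if c = 0 then 0 else 1)" unfolding S3_def by simp
    ultimately show ?thesis by simp
  qed
  also have "\<dots> = D" by (simp add: D_def)
  finally show ?thesis by (simp add: degree_def)
qed

lemma deg_all: "\<forall>v\<in>{..<N}. degree {..<N} (cE m k N) v \<le> D"
  using deg_A deg_W by (meson lessThan_iff not_less)

lemma arith: "2 * N = m * (D + 3) + 2"
  using cc unfolding N_def D_def by (auto simp: algebra_simps)

end


theorem theorem3p1:
  fixes m \<Delta> :: nat
  assumes "1 \<le> m" and "1 \<le> \<Delta>" and "\<Delta> \<le> m" and "even ((\<Delta> - 1) * m)"
  shows "\<exists>(V :: nat set) E. simple_graph V E \<and> V \<noteq> {} \<and> adim V E = m \<and>
           max_degree V E = \<Delta> \<and>
           real (adim V E) = 2 * (real (card V) - 1) / (real \<Delta> + 3)"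
proof -
  define r where "r = \<Delta> - 1"
  define k where "k = r div 2"
  define c where "c = (if odd r then m div 2 else 0)"
  have rk: "r = 2*k + (if odd r then 1 else 0)" unfolding k_def by simp
  have k2: "2*k < m" using assms rk r_def by (auto split: if_splits)
  have cc: "c = 0 \<or> (2*c = m \<and> 2*k+2 \<le> m)"
  proof (cases "odd r")
    case True
    then have "even m" using assms(4) r_def by simp
    then have "2*c = m" using True c_def by simp
    moreover have "2*k+2 \<le> m" using True rk r_def assms by simp
    ultimately show ?thesis by simp
  next
    case False then show ?thesis using c_def by simp
  qed
  interpret C: constr m k c using assms(1) k2 cc by unfold_locales
  have cpos: "c \<noteq> 0 \<longleftrightarrow> odd r"
  proof
    assume "c \<noteq> 0" then show "odd r" using c_def by (auto split: if_splits)
  next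
    assume "odd r" then have "even m" using assms(4) r_def by simp
    then show "c \<noteq> 0" using \<open>odd r\<close> c_def assms(1) by auto
  qed
  have DD: "C.D = \<Delta>" unfolding C.D_def using rk cpos r_def assms(2) by auto
  define V where "V = {..<C.N}"
  define E where "E = cE m k C.N"
  have sg: "simple_graph V E" unfolding V_def E_def by (rule C.sg)
  have res: "adj_resolving V E {..<m}" unfolding V_def E_def by (rule C.res)
  have deg: "\<forall>v\<in>V. degree V E v \<le> \<Delta>" unfolding V_def E_def using C.deg_all DD by simp
  have cardV: "card V = C.N" unfolding V_def by simp
  have ar: "2 * C.N = m * (\<Delta> + 3) + 2" using C.arith DD by simp
  have "0 \<in> V" unfolding V_def using C.mN assms(1) by simp
  then have Vne: "V \<noteq> {}" by blast
  have finV: "finite V" unfolding V_def by simp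
  have adim: "adim V E = m"
    unfolding adim_def
  proof (rule Least_equality)
    show "\<exists>A. adj_resolving V E A \<and> card A = m" using res by auto
  next
    fix y assume "\<exists>A. adj_resolving V E A \<and> card A = y"
    then obtain A where A: "adj_resolving V E A" "card A = y" by blast
    have "2 * card V \<le> card A * (\<Delta> + 3) + 2" by (rule lower_bound[OF sg deg A(1)])
    then have "m * (\<Delta> + 3) \<le> y * (\<Delta> + 3)" using cardV ar A(2) by simp
    then show "m \<le> y" by simp
  qed
  have maxd: "max_degree V E = \<Delta>"
  proof (rule antisym)
    show "max_degree V E \<le> \<Delta>" unfolding max_degree_def using deg finV Vne by simp
  next
    have "\<forall>v\<in>V. degree V E v \<le> max_degree V E" unfolding max_degree_def using finV by simp
    then have "2 * card V \<le> card {..<m} * (max_degree V E + 3) + 2" by (rule lower_bound[OF sg _ res])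
    then have "m * (\<Delta> + 3) \<le> m * (max_degree V E + 3)" using cardV ar by simp
    then show "\<Delta> \<le> max_degree V E" using assms(1) by simp
  qed
  have "real (2 * C.N) = real (m * (\<Delta> + 3) + 2)" using ar by simp
  then have "2 * real (card V) = real m * (real \<Delta> + 3) + 2" using cardV by simp
  then have eq: "real (adim V E) = 2 * (real (card V) - 1) / (real \<Delta> + 3)"
    using adim by (simp add: field_simps)
  show ?thesis using sg Vne adim maxd eq by blast
qed

end
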